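(* Let $n\ge3$, $m\ge1$. Every superderivation (even or odd) $D$ of the Lie superalgebra $L^{n,m}$ is a derivation of the underlying Lie algebra of $L^{n,m}$ (i.e., of the vector space $L^{n,m}$ with the same bracket, which is antisymmetric and satisfies the ordinary Jacobi identity), namely $D([a,b])=[D(a),b]+[a,D(b)]$ for all $a,b$. In particular every odd superderivation $D$ satisfies $x_1\notin$ the support of $D(y_1)$, i.e. the $x_1$-coordinate of $D(y_1)$ is $0$.
   Context: $L^{n,m}$ has even basis $x_1,\dots,x_n$ and odd basis $y_1,\dots,y_m$, with only nonzero brackets $[x_1,x_i]=-[x_i,x_1]=x_{i+1}$ ($2\le i\le n-1$) and $[x_1,y_j]=-[y_j,x_1]=y_{j+1}$ ($1\le j\le m-1$). A superderivation of degree $s\in\mathbb{Z}_2$ of a Lie superalgebra $L$ is a linear map $D$ with $D(L_{\bar i})\subset L_{\bar i+s}$ and $D([a,b])=[D(a),b]+(-1)^{s|a|}[a,D(b)]$ for homogeneous $a,b$. *)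

theory Defs
  imports Main
begin

text \<open>Elements of L^{n,m} over a field 'k are represented by coordinate pairs (u, w):
  u i is the coefficient of x_i (1 \<le> i \<le> n), w j the coefficient of y_j (1 \<le> j \<le> m);
  coordinates outside these ranges are zero (see carrierL).\<close>

type_synonym 'k svec = "(nat \<Rightarrow> 'k) \<times> (nat \<Rightarrow> 'k)"

definition carrierL :: "nat \<Rightarrow> nat \<Rightarrow> ('k::field) svec set" where
  "carrierL n m = {a. (\<forall>i. (i < 1 \<or> n < i) \<longrightarrow> fst a i = 0) \<and>
                       (\<forall>j. (j < 1 \<or> m < j) \<longrightarrow> snd a j = 0)}"

definition addL :: "('k::field) svec \<Rightarrow> 'k svec \<Rightarrow> 'k svec" where
  "addL a b = (\<lambda>i. fst a i + fst b i, \<lambda>j. snd a j + snd b j)"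

definition smulL :: "'k::field \<Rightarrow> 'k svec \<Rightarrow> 'k svec" where
  "smulL c a = (\<lambda>i. c * fst a i, \<lambda>j. c * snd a j)"

text \<open>Bilinear extension of [x_1,x_i] = -[x_i,x_1] = x_{i+1} (2 \<le> i \<le> n-1),
  [x_1,y_j] = -[y_j,x_1] = y_{j+1} (1 \<le> j \<le> m-1), all other brackets of basis vectors 0.\<close>
definition brL :: "nat \<Rightarrow> nat \<Rightarrow> ('k::field) svec \<Rightarrow> 'k svec \<Rightarrow> 'k svec" where
  "brL n m a b =
    (\<lambda>k. if 3 \<le> k \<and> k \<le> n then fst a 1 * fst b (k - 1) - fst a (k - 1) * fst b 1 else 0,
     \<lambda>k. if 2 \<le> k \<and> k \<le> m then fst a 1 * snd b (k - 1) - snd a (k - 1) * fst b 1 else 0)"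

text \<open>Homogeneous components: parity False = even part (span of x_i), True = odd part (span of y_j).\<close>
definition homL :: "nat \<Rightarrow> nat \<Rightarrow> bool \<Rightarrow> ('k::field) svec set" where
  "homL n m p = (if p then {a \<in> carrierL n m. fst a = (\<lambda>_. 0)}
                 else {a \<in> carrierL n m. snd a = (\<lambda>_. 0)})"

definition y1L :: "('k::field) svec" where
  "y1L = (\<lambda>_. 0, \<lambda>j. if j = 1 then 1 else 0)"

definition linearL :: "nat \<Rightarrow> nat \<Rightarrow> (('k::field) svec \<Rightarrow> 'k svec) \<Rightarrow> bool" where
  "linearL n m D \<longleftrightarrow> (\<forall>a\<in>carrierL n m. D a \<in> carrierL n m) \<and>
     (\<forall>a\<in>carrierL n m. \<forall>b\<in>carrierL n m. D (addL a b) = addL (D a) (D b)) \<and>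
     (\<forall>c. \<forall>a\<in>carrierL n m. D (smulL c a) = smulL c (D a))"

definition superderL :: "nat \<Rightarrow> nat \<Rightarrow> bool \<Rightarrow> (('k::field) svec \<Rightarrow> 'k svec) \<Rightarrow> bool" where
  "superderL n m s D \<longleftrightarrow> linearL n m D \<and>
     (\<forall>p. \<forall>a\<in>homL n m p. D a \<in> homL n m (p \<noteq> s)) \<and>
     (\<forall>p q. \<forall>a\<in>homL n m p. \<forall>b\<in>homL n m q.
        D (brL n m a b) = addL (brL n m (D a) b)
                               (smulL (if s \<and> p then -1 else 1) (brL n m a (D b))))"

end

theory Submission
  imports Defs
begin

definition evP :: "('k::field) svec \<Rightarrow> 'k svec" where "evP a = (fst a, \<lambda>_. 0)"
definition odP :: "('k::field) svec \<Rightarrow> 'k svec" where "odP a = (\<lambda>_. 0, snd a)"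

lemma brL_carrier: "brL n m a b \<in> carrierL n m"
  by (auto simp: brL_def carrierL_def)

lemma parts: "a \<in> carrierL n m \<Longrightarrow> evP a \<in> homL n m False \<and> odP a \<in> homL n m True
   \<and> a = addL (evP a) (odP a)"
  by (auto simp: evP_def odP_def homL_def carrierL_def addL_def)

lemma hom_car: "a \<in> homL n m p \<Longrightarrow> a \<in> carrierL n m"
  by (auto simp: homL_def split: if_splits)

lemma D_zero:
  assumes "linearL n m D"
  shows "D (\<lambda>_. (0::'k::field), \<lambda>_. 0) = (\<lambda>_. 0, \<lambda>_. 0)"
proof -
  have z: "(\<lambda>_. (0::'k), \<lambda>_. 0) \<in> carrierL n m" by (simp add: carrierL_def)
  have "D (smulL 0 (\<lambda>_. (0::'k), \<lambda>_. 0)) = smulL 0 (D (\<lambda>_. 0, \<lambda>_. 0))"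
    using assms z unfolding linearL_def by blast
  thus ?thesis by (simp add: smulL_def)
qed

lemma odd_fst1:
  fixes D :: "('k::field) svec \<Rightarrow> 'k svec"
  assumes n: "3 \<le> n" and sd: "superderL n m True D" and b: "b \<in> homL n m True"
  shows "fst (D b) 1 = 0"
proof -
  define x2 :: "'k svec" where "x2 = (\<lambda>i. if i = 2 then 1 else 0, \<lambda>_. 0)"
  have x2h: "x2 \<in> homL n m False" using n by (auto simp: x2_def homL_def carrierL_def)
  have lin: "linearL n m D" using sd by (simp add: superderL_def)
  have eq: "D (brL n m b x2) = addL (brL n m (D b) x2) (smulL (-1) (brL n m b (D x2)))"
    using sd b x2h unfolding superderL_def by fastforce
  have fb: "fst b = (\<lambda>_. 0)" using b by (simp add: homL_def)
  have br0: "brL n m b x2 = (\<lambda>_. 0, \<lambda>_. 0)" using fb by (auto simp: brL_def x2_def)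
  have Dx2: "D x2 \<in> homL n m True" using sd x2h unfolding superderL_def by fastforce
  hence fD: "fst (D x2) = (\<lambda>_. 0)" by (simp add: homL_def)
  have "fst (D (brL n m b x2)) 3 = 0" using br0 D_zero[OF lin] by simp
  hence "fst (addL (brL n m (D b) x2) (smulL (-1) (brL n m b (D x2)))) 3 = 0" using eq by simp
  thus ?thesis using n fb fD by (simp add: addL_def smulL_def brL_def x2_def)
qed

lemma hom_eq:
  fixes D :: "('k::field) svec \<Rightarrow> 'k svec"
  assumes n: "3 \<le> n" and sd: "superderL n m s D" and a: "a \<in> homL n m p" and b: "b \<in> homL n m q"
  shows "D (brL n m a b) = addL (brL n m (D a) b) (brL n m a (D b))"
proof -
  have eq: "D (brL n m a b) = addL (brL n m (D a) b) (smulL (if s \<and> p then -1 else 1) (brL n m a (D b)))"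
    using sd a b unfolding superderL_def by blast
  show ?thesis
  proof (cases "s \<and> p")
    case False hence h: "(if s \<and> p then -1 else (1::'k)) = 1" by (simp only: if_False)
    have "smulL (1::'k) (brL n m a (D b)) = brL n m a (D b)" by (simp add: smulL_def)
    thus ?thesis using eq unfolding h by simp
  next
    case True
    hence s: s and p: p by auto
    have fa: "fst a = (\<lambda>_. 0)" using a p by (simp add: homL_def)
    have "fst (D b) 1 = 0"
    proof (cases q)
      case True thus ?thesis using odd_fst1[OF n] sd s b by simp
    next
      case False
      hence "D b \<in> homL n m True" using sd s b unfolding superderL_def by fastforce
      thus ?thesis by (simp add: homL_def)
    qed
    hence "brL n m a (D b) = (\<lambda>_. 0, \<lambda>_. 0)" using fa by (auto simp: brL_def)
    thus ?thesis using eq by (simp add: smulL_def)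
  qed
qed

theorem mainTheorem9:
  fixes D :: "('k::field) svec \<Rightarrow> 'k svec" and n m :: nat and s :: bool
  assumes "3 \<le> n" and "1 \<le> m" and "superderL n m s D"
  shows "(\<forall>a\<in>carrierL n m. \<forall>b\<in>carrierL n m.
            D (brL n m a b) = addL (brL n m (D a) b) (brL n m a (D b)))
         \<and> (s \<longrightarrow> fst (D y1L) 1 = 0)"
proof (intro conjI ballI impI)
  have lin: "linearL n m D" using assms(3) by (simp add: superderL_def)
  fix a b :: "'k svec" assume a: "a \<in> carrierL n m" and b: "b \<in> carrierL n m"
  note pa = parts[OF a] and pb = parts[OF b]
  let ?ae = "evP a" and ?ao = "odP a" and ?be = "evP b" and ?bo = "odP b"
  have bil1: "\<And>x y z. brL n m (addL x y) z = addL (brL n m x z) (brL n m y z)"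
    by (auto simp: brL_def addL_def algebra_simps)
  have bil2: "\<And>x y z. brL n m z (addL x y) = addL (brL n m z x) (brL n m z y)"
    by (auto simp: brL_def addL_def algebra_simps)
  have addD: "\<And>x y. x \<in> carrierL n m \<Longrightarrow> y \<in> carrierL n m \<Longrightarrow> D (addL x y) = addL (D x) (D y)"
    using lin unfolding linearL_def by blast
  have addc: "\<And>x y. x \<in> carrierL n m \<Longrightarrow> y \<in> carrierL n m \<Longrightarrow> addL x y \<in> carrierL n m"
    by (auto simp: carrierL_def addL_def)
  have Da: "D a = addL (D ?ae) (D ?ao)"
    using pa addD hom_car by metis
  have Db: "D b = addL (D ?be) (D ?bo)"
    using pb addD hom_car by metis
  have "brL n m a b = addL (addL (brL n m ?ae ?be) (brL n m ?ae ?bo))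
                          (addL (brL n m ?ao ?be) (brL n m ?ao ?bo))"
    using pa pb bil1 bil2 by metis
  hence "D (brL n m a b) = addL (addL (D (brL n m ?ae ?be)) (D (brL n m ?ae ?bo)))
                          (addL (D (brL n m ?ao ?be)) (D (brL n m ?ao ?bo)))"
    using addD addc brL_carrier by metis
  also have "\<dots> = addL (addL (addL (brL n m (D ?ae) ?be) (brL n m ?ae (D ?be)))
                             (addL (brL n m (D ?ae) ?bo) (brL n m ?ae (D ?bo))))
                       (addL (addL (brL n m (D ?ao) ?be) (brL n m ?ao (D ?be)))
                             (addL (brL n m (D ?ao) ?bo) (brL n m ?ao (D ?bo))))"
    using hom_eq[OF assms(1) assms(3)] pa pb by metis
  also have "\<dots> = addL (brL n m (D a) b) (brL n m a (D b))"
  proof -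
    have e: "addL (brL n m (D a) b) (brL n m a (D b)) = addL (brL n m (addL (D ?ae) (D ?ao)) (addL ?be ?bo)) (brL n m (addL ?ae ?ao) (addL (D ?be) (D ?bo)))"
      using Da Db pa pb by metis
    show ?thesis unfolding e by (simp add: bil1 bil2) (simp add: addL_def algebra_simps)
  qed
  finally show "D (brL n m a b) = addL (brL n m (D a) b) (brL n m a (D b))" .
next
  assume s: s
  have "y1L \<in> homL n m True" using assms(2) by (auto simp: y1L_def homL_def carrierL_def)
  thus "fst (D y1L) 1 = 0" using odd_fst1[OF assms(1)] assms(3) s by simp
qed

end
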